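(* Let $n\geq 3$ be an integer and put $m=2^{n-1}$. Let $G_2(n)=\{0,1,\dots,2^n-1\}$ with the binary operation $\oplus$, and let $\mathrm{gyr}\colon G_2(n)\times G_2(n)\to \mathrm{Aut}(G_2(n),\oplus)$ be the map, all as defined in the context below. Then $(G_2(n),\oplus)$ is a gyrogroup with gyroautomorphisms given by $\mathrm{gyr}$; that is, $0\oplus x=x$ for all $x$, every element has a left inverse with respect to $0$, $a\oplus(b\oplus c)=(a\oplus b)\oplus \mathrm{gyr}[a,b](c)$ for all $a,b,c\in G_2(n)$, and $\mathrm{gyr}[a,b]=\mathrm{gyr}[a\oplus b,b]$ for all $a,b\in G_2(n)$.
   Context: A groupoid $(G,\oplus)$ is a gyrogroup if: (G1) there is $0\in G$ with $0\oplus x=x$ for all $x$; (G2) for each $a\in G$ there is $b\in G$ with $b\oplus a=0$; (G3) there is a function $\mathrm{gyr}\colon G\times G\to\mathrm{Aut}(G,\oplus)$ (automorphisms = bijections preserving $\oplus$) such that $a\oplus(b\oplus c)=(a\oplus b)\oplus\mathrm{gyr}[a,b](c)$ for all $a,b,c$; (G4) $\mathrm{gyr}[a,b]=\mathrm{gyr}[a\oplus b,b]$ for all $a,b$. Setup: $n\ge 3$, $m=2^{n-1}$, $G_2(n)=\{0,1,\dots,2^n-1\}$, $P(n)=\{0,\dots,m-1\}$, $H(n)=\{m,\dots,2^n-1\}$; $O_P,E_P$ are the odd/even elements of $P(n)$, $O_H,E_H$ the odd/even elements of $H(n)$. For $i,j\in G_2(n)$ let $t,s\in P(n)$ with $t\equiv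 i+j\pmod m$, $s\equiv i+j+\frac m2\pmod m$, and set $i\oplus j=t$ if $(i,j)\in (P(n)\times P(n))\cup\big[(H(n)\times H(n))\setminus(E_H\times O_H)\big]$; $i\oplus j=t+m$ if $(i,j)\in (P(n)\times H(n))\cup\big[(H(n)\times P(n))\setminus(E_H\times O_P)\big]$; $i\oplus j=s$ if $(i,j)\in E_H\times O_H$; $i\oplus j=s+m$ if $(i,j)\in E_H\times O_P$. Let $A\colon G_2(n)\to G_2(n)$ be $A(i)=r$ if $i\in O_P$, $A(i)=r+m$ if $i\in O_H$, $A(i)=i$ otherwise, where $r\in P(n)$, $r\equiv i+\frac m2\pmod m$ ($A$ is an automorphism of $(G_2(n),\oplus)$). Let $M=[O_P\times(O_H\cup E_H)]\cup[O_H\times(O_P\cup E_H)]\cup[E_H\times(O_P\cup O_H)]$, and define $\mathrm{gyr}[a,b]=A$ if $(a,b)\in M$ and $\mathrm{gyr}[a,b]=I$ (the identity map) otherwise. *)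

theory Defs
  imports Main
begin

definition groupoid_aut :: "'a set \<Rightarrow> ('a \<Rightarrow> 'a \<Rightarrow> 'a) \<Rightarrow> ('a \<Rightarrow> 'a) \<Rightarrow> bool" where
  "groupoid_aut G op f \<longleftrightarrow> bij_betw f G G \<and> (\<forall>x\<in>G. \<forall>y\<in>G. f (op x y) = op (f x) (f y))"

definition is_gyrogroup ::
  "'a set \<Rightarrow> ('a \<Rightarrow> 'a \<Rightarrow> 'a) \<Rightarrow> 'a \<Rightarrow> ('a \<Rightarrow> 'a \<Rightarrow> 'a \<Rightarrow> 'a) \<Rightarrow> bool" where
  "is_gyrogroup G op e gyr \<longleftrightarrow>
     (\<forall>x\<in>G. \<forall>y\<in>G. op x y \<in> G) \<and>
     e \<in> G \<and> (\<forall>x\<in>G. op e x = x) \<and>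
     (\<forall>a\<in>G. \<exists>b\<in>G. op b a = e) \<and>
     (\<forall>a\<in>G. \<forall>b\<in>G. groupoid_aut G op (gyr a b)) \<and>
     (\<forall>a\<in>G. \<forall>b\<in>G. \<forall>c\<in>G. op a (op b c) = op (op a b) (gyr a b c)) \<and>
     (\<forall>a\<in>G. \<forall>b\<in>G. \<forall>c\<in>G. gyr a b c = gyr (op a b) b c)"

definition mG :: "nat \<Rightarrow> nat" where "mG n = 2 ^ (n - 1)"

definition G2 :: "nat \<Rightarrow> nat set" where "G2 n = {0..<2 ^ n}"
definition P :: "nat \<Rightarrow> nat set" where "P n = {0..<mG n}"
definition H :: "nat \<Rightarrow> nat set" where "H n = {mG n..<2 ^ n}"

definition OP :: "nat \<Rightarrow> nat set" where "OP n = {i \<in> P n. odd i}"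
definition EP :: "nat \<Rightarrow> nat set" where "EP n = {i \<in> P n. even i}"
definition OH :: "nat \<Rightarrow> nat set" where "OH n = {i \<in> H n. odd i}"
definition EH :: "nat \<Rightarrow> nat set" where "EH n = {i \<in> H n. even i}"

definition oplusG :: "nat \<Rightarrow> nat \<Rightarrow> nat \<Rightarrow> nat" where
  "oplusG n i j =
     (let m = mG n; t = (i + j) mod m; s = (i + j + m div 2) mod m in
      if (i, j) \<in> EH n \<times> OH n then s
      else if (i, j) \<in> EH n \<times> OP n then s + m
      else if (i, j) \<in> (P n \<times> P n) \<union> (H n \<times> H n) then t
      else t + m)"

definition autA :: "nat \<Rightarrow> nat \<Rightarrow> nat" where
  "autA n i =
     (let m = mG n; r = (i + m div 2) mod m in
      if i \<in> OP n then r else if i \<in> OH n then r + m else i)"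

definition Mset :: "nat \<Rightarrow> (nat \<times> nat) set" where
  "Mset n = (OP n \<times> (OH n \<union> EH n)) \<union> (OH n \<times> (OP n \<union> EH n)) \<union> (EH n \<times> (OP n \<union> OH n))"

definition gyrG :: "nat \<Rightarrow> nat \<Rightarrow> nat \<Rightarrow> nat \<Rightarrow> nat" where
  "gyrG n a b = (if (a, b) \<in> Mset n then autA n else id)"

end

theory Submission
  imports Defs
begin

definition opA :: "nat \<Rightarrow> nat \<Rightarrow> nat \<Rightarrow> nat" where
 "opA m x y = (if (m \<le> x) \<noteq> (m \<le> y) then m else 0) +
    (x + y + (if m \<le> x \<and> even x \<and> odd y then m div 2 else 0)) mod m"

definition AA :: "nat \<Rightarrow> nat \<Rightarrow> nat" where
 "AA m x = (if m \<le> x then m else 0) + (x + (if odd x then m div 2 else 0)) mod m"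

lemma modq: "k mod 2 = k' mod 2 \<Longrightarrow> (S + k*q) mod (2*q) = (S + k'*q) mod (2*(q::nat))"
proof -
  assume h: "k mod 2 = k' mod 2"
  have e: "\<And>k. (k*q) mod (2*q) = (k mod 2)*q" by (simp add: mult.commute[of 2] mod_mult_mult2)
  have "(S + k*q) mod (2*q) = (S + (k*q) mod (2*q)) mod (2*q)" by (rule mod_add_right_eq[symmetric])
  also have "\<dots> = (S + (k'*q) mod (2*q)) mod (2*q)" unfolding e using h by simp
  also have "\<dots> = (S + k'*q) mod (2*q)" by (rule mod_add_right_eq)
  finally show ?thesis .
qed

lemma eq2: assumes "x < 2*m" "y < 2*m" "(m \<le> x) = (m \<le> (y::nat))" "x mod m = y mod m" shows "x = y"
proof (cases "m \<le> x")
  case True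
  then have "x mod m = x - m" "y mod m = y - m" using assms by (simp_all add: le_mod_geq)
  then show ?thesis using assms True by simp
next
  case False
  then show ?thesis using assms by simp
qed


lemma even_mod_even: "even (m::nat) \<Longrightarrow> even (a mod m) = even a"
  by (metis dvd_mod_iff even_mod_2_iff mod_mod_cancel)

definition Mb :: "nat \<Rightarrow> nat \<Rightarrow> nat \<Rightarrow> bool" where
  "Mb m a b = ((\<not> m \<le> a \<and> odd a \<and> m \<le> b) \<or> (m \<le> a \<and> odd a \<and> ((\<not> m \<le> b \<and> odd b) \<or> (m \<le> b \<and> even b)))
      \<or> (m \<le> a \<and> even a \<and> odd b))"

definition gA :: "nat \<Rightarrow> nat \<Rightarrow> nat \<Rightarrow> nat \<Rightarrow> nat" where
  "gA m a b = (if Mb m a b then AA m else id)"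

context
  fixes m q :: nat
  assumes mq: "m = 2*q" and eq: "even q" and qpos: "0 < q"
begin

lemma md2: "m div 2 = q" using mq by simp
lemma evm: "even m" using mq by simp

lemma modlt: "z mod m < m" using qpos mq by simp

lemma opA_alt: "\<exists>w. opA m x y = (if (m \<le> x) \<noteq> (m \<le> y) then m else 0) + w \<and> w < m"
  unfolding opA_def using modlt by blast

lemma AA_alt: "\<exists>w. AA m x = (if m \<le> x then m else 0) + w \<and> w < m"
  unfolding AA_def using modlt by blast

lemma opA_lt: "x < 2*m \<Longrightarrow> y < 2*m \<Longrightarrow> opA m x y < 2*m"
  using opA_alt[of x y] by (auto split: if_splits)

lemma opA_hi: "x < 2*m \<Longrightarrow> y < 2*m \<Longrightarrow> (m \<le> opA m x y) = ((m \<le> x) \<noteq> (m \<le> y))"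
  using opA_alt[of x y] by (auto split: if_splits)

lemma opA_mod: "opA m x y mod m = (x + y + of_bool (m \<le> x \<and> even x \<and> odd y) * q) mod m"
  unfolding opA_def md2 by auto

lemma opA_even: "even (opA m x y) = even (x + y)"
  unfolding opA_def md2 using evm eq by (auto simp: even_mod_even)

lemma AA_lt: "x < 2*m \<Longrightarrow> AA m x < 2*m"
  using AA_alt[of x] by (auto split: if_splits)

lemma AA_hi: "x < 2*m \<Longrightarrow> (m \<le> AA m x) = (m \<le> x)"
  using AA_alt[of x] by (auto split: if_splits)

lemma AA_mod: "AA m x mod m = (x + of_bool (odd x) * q) mod m"
  unfolding AA_def md2 by auto

lemma AA_even: "even (AA m x) = even x"
  unfolding AA_def md2 using evm eq by (auto simp: even_mod_even)


lemma gA_facts: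
  assumes "c < 2*m"
  shows "gA m a b c < 2*m" "(m \<le> gA m a b c) = (m \<le> c)" "even (gA m a b c) = even c"
    "gA m a b c mod m = (c + of_bool (Mb m a b \<and> odd c) * q) mod m"
  using assms AA_lt AA_hi AA_even AA_mod by (auto simp: gA_def)

lemma M1: "(a + b mod m + (k::nat)) mod m = (a + b + k) mod m"
  by (metis add.commute add.left_commute mod_add_left_eq)
lemma M2: "(a mod m + b mod m + (k::nat)) mod m = (a + b + k) mod m"
  by (metis add.commute add.left_commute mod_add_left_eq)
lemma M3: "(a mod m + (k::nat)) mod m = (a + k) mod m"
  by (rule mod_add_left_eq)

lemma assoc:
  assumes a: "a < 2*m" and b: "b < 2*m" and c: "c < 2*m"
  shows "opA m a (opA m b c) = opA m (opA m a b) (gA m a b c)"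
proof (rule eq2)
  show "opA m a (opA m b c) < 2*m" using a b c by (simp add: opA_lt)
  show "opA m (opA m a b) (gA m a b c) < 2*m" using a b c by (simp add: opA_lt gA_facts)
  show "(m \<le> opA m a (opA m b c)) = (m \<le> opA m (opA m a b) (gA m a b c))"
    using a b c by (auto simp add: opA_lt gA_facts opA_hi)
  define k1 where "k1 = (of_bool :: bool \<Rightarrow> nat) (m \<le> a \<and> even a \<and> odd (b + c))"
  define k2 where "k2 = (of_bool :: bool \<Rightarrow> nat) (m \<le> b \<and> even b \<and> odd c)"
  define k3 where "k3 = (of_bool :: bool \<Rightarrow> nat) ((m \<le> a) \<noteq> (m \<le> b) \<and> even (a + b) \<and> odd c)"
  define k4 where "k4 = (of_bool :: bool \<Rightarrow> nat) (m \<le> a \<and> even a \<and> odd b)"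
  define k5 where "k5 = (of_bool :: bool \<Rightarrow> nat) (Mb m a b \<and> odd c)"
  have L: "opA m a (opA m b c) mod m = (a + b + c + (k1 + k2) * q) mod m"
  proof -
    have "opA m a (opA m b c) mod m = (a + opA m b c + k1 * q) mod m"
      unfolding opA_mod k1_def opA_even ..
    also have "\<dots> = (a + opA m b c mod m + k1 * q) mod m" by (rule M1[symmetric])
    also have "\<dots> = (a + (b + c + k2 * q) mod m + k1 * q) mod m" unfolding opA_mod k2_def ..
    also have "\<dots> = (a + b + c + (k1 + k2) * q) mod m" unfolding M1 by (simp add: algebra_simps)
    finally show ?thesis .
  qed
  have R: "opA m (opA m a b) (gA m a b c) mod m = (a + b + c + (k3 + k4 + k5) * q) mod m"
  proof -
    have "opA m (opA m a b) (gA m a b c) mod m = (opA m a b + gA m a b c + k3 * q) mod m"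
      unfolding opA_mod k3_def opA_even using a b c by (simp add: gA_facts opA_hi)
    also have "\<dots> = (opA m a b mod m + gA m a b c mod m + k3 * q) mod m" by (rule M2[symmetric])
    also have "\<dots> = ((a + b + k4 * q) mod m + (c + k5 * q) mod m + k3 * q) mod m"
      unfolding opA_mod k4_def k5_def gA_facts(4)[OF c] ..
    also have "\<dots> = (a + b + c + (k3 + k4 + k5) * q) mod m" unfolding M2 by (simp add: algebra_simps)
    finally show ?thesis .
  qed
  have P: "(k1 + k2) mod 2 = (k3 + k4 + k5) mod 2"
    unfolding k1_def k2_def k3_def k4_def k5_def Mb_def
    by (cases "m \<le> a"; cases "m \<le> b"; cases "m \<le> c"; cases "even a"; cases "even b"; cases "even c"; simp)
  show "opA m a (opA m b c) mod m = opA m (opA m a b) (gA m a b c) mod m"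
  proof -
    have "(a+b+c + (k1+k2)*q) mod (2*q) = (a+b+c+(k3+k4+k5)*q) mod (2*q)" by (rule modq[OF P])
    then show ?thesis unfolding L R mq[symmetric] .
  qed
qed

lemma gyr_loop:
  assumes a: "a < 2*m" and b: "b < 2*m"
  shows "gA m a b = gA m (opA m a b) b"
  unfolding gA_def Mb_def using a b
  by (cases "m \<le> a"; cases "m \<le> b"; cases "even a"; cases "even b"; simp add: opA_hi opA_even)

lemma AA_hom:
  assumes x: "x < 2*m" and y: "y < 2*m"
  shows "AA m (opA m x y) = opA m (AA m x) (AA m y)"
proof (rule eq2)
  show "AA m (opA m x y) < 2*m" using x y by (simp add: opA_lt AA_lt)
  show "opA m (AA m x) (AA m y) < 2*m" using x y by (simp add: opA_lt AA_lt)
  show "(m \<le> AA m (opA m x y)) = (m \<le> opA m (AA m x) (AA m y))"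
    using x y by (simp add: opA_lt AA_lt opA_hi AA_hi)
  define k where "k = (of_bool (m \<le> x \<and> even x \<and> odd y) :: nat)"
  have L: "AA m (opA m x y) mod m = (x + y + (k + of_bool (odd (x+y))) * q) mod m"
  proof -
    have "AA m (opA m x y) mod m = (opA m x y + of_bool (odd (x+y)) * q) mod m"
      unfolding AA_mod opA_even ..
    also have "\<dots> = (opA m x y mod m + of_bool (odd (x+y)) * q) mod m" by (rule M3[symmetric])
    also have "\<dots> = (x + y + (k + of_bool (odd (x+y))) * q) mod m"
      unfolding opA_mod k_def M3 by (simp add: algebra_simps)
    finally show ?thesis .
  qed
  have R: "opA m (AA m x) (AA m y) mod m = (x + y + (k + of_bool (odd x) + of_bool (odd y)) * q) mod m"
  proof -
    have "opA m (AA m x) (AA m y) mod m = (AA m x + AA m y + k * q) mod m"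
      unfolding opA_mod k_def using x y by (simp add: AA_hi AA_even)
    also have "\<dots> = (AA m x mod m + AA m y mod m + k * q) mod m" by (rule M2[symmetric])
    also have "\<dots> = (x + y + (k + of_bool (odd x) + of_bool (odd y)) * q) mod m"
      unfolding AA_mod M2 by (simp add: algebra_simps)
    finally show ?thesis .
  qed
  have P: "(k + of_bool (odd (x+y))) mod 2 = (k + of_bool (odd x) + of_bool (odd y)) mod 2"
    by (cases "even x"; cases "even y"; simp)
  show "AA m (opA m x y) mod m = opA m (AA m x) (AA m y) mod m"
  proof -
    have "(x + y + (k + of_bool (odd (x+y))) * q) mod (2*q) = (x + y + (k + of_bool (odd x) + of_bool (odd y)) * q) mod (2*q)" by (rule modq[OF P])
    then show ?thesis unfolding L R mq[symmetric] .
  qed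
qed

lemma AA_inv:
  assumes x: "x < 2*m"
  shows "AA m (AA m x) = x"
proof (rule eq2)
  show "AA m (AA m x) < 2*m" using x by (simp add: AA_lt)
  show "x < 2*m" by fact
  show "(m \<le> AA m (AA m x)) = (m \<le> x)" using x by (simp add: AA_lt AA_hi)
  have P: "(of_bool (odd x) + of_bool (odd x)) mod 2 = (0::nat) mod 2" by simp
  have "AA m (AA m x) mod m = (AA m x mod m + of_bool (odd x) * q) mod m"
    unfolding AA_mod[of "AA m x"] AA_even by (simp add: mod_simps)
  also have "\<dots> = (x + (of_bool (odd x) + of_bool (odd x)) * q) mod m"
    unfolding AA_mod by (simp add: mod_simps algebra_simps)
  also have "\<dots> = (x + 0 * q) mod m" unfolding mq by (rule modq[OF P])
  finally show "AA m (AA m x) mod m = x mod m" by simp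
qed

lemma linv:
  assumes a: "a < 2*m"
  shows "opA m ((if m \<le> a then m else 0) + (m - a mod m) mod m) a = 0"
proof -
  define b where "b = (if m \<le> a then m else 0) + (m - a mod m) mod m"
  have mp: "0 < m" using qpos mq by simp
  have am: "a mod m < m" by (rule modlt)
  obtain w where w: "b = (if m \<le> a then m else 0) + w" "w < m" unfolding b_def using modlt by blast
  have blt: "b < 2*m" using w by (auto split: if_splits)
  have bhi: "(m \<le> b) = (m \<le> a)" using w by (auto split: if_splits)
  have "even b = even (m - a mod m)" unfolding b_def using evm by (auto simp: even_mod_even)
  also have "\<dots> = even (a mod m)" using am evm by auto
  also have "\<dots> = even a" using evm by (simp add: even_mod_even)
  finally have bev: "even b = even a" .
  have bm: "b mod m = (m - a mod m) mod m" unfolding b_def by auto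
  show ?thesis unfolding b_def[symmetric]
  proof (rule eq2)
    show "opA m b a < 2*m" using a blt by (simp add: opA_lt)
    show "0 < 2*m" using mp by simp
    show "(m \<le> opA m b a) = (m \<le> 0)" using a blt bhi mp by (simp add: opA_hi)
    have "opA m b a mod m = (b + a) mod m" unfolding opA_mod using bev by auto
    also have "\<dots> = (b mod m + a mod m) mod m" by (simp add: mod_simps)
    also have "\<dots> = ((m - a mod m) mod m + a mod m) mod m" unfolding bm ..
    also have "\<dots> = (m - a mod m + a mod m) mod m" by (simp add: mod_simps)
    also have "\<dots> = 0" using am by simp
    finally show "opA m b a mod m = 0 mod m" by simp
  qed
qed


lemma op0: "x < 2*m \<Longrightarrow> opA m 0 x = x"
  unfolding opA_def using modlt[of x]
  by (cases "m \<le> x") (auto simp: le_mod_geq)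

lemma AA_aut: "groupoid_aut {0..<2*m} (opA m) (AA m)"
  unfolding groupoid_aut_def
proof
  show "bij_betw (AA m) {0..<2*m} {0..<2*m}"
    by (rule bij_betw_byWitness[where f'="AA m"]) (auto simp: AA_lt AA_inv)
  show "\<forall>x\<in>{0..<2*m}. \<forall>y\<in>{0..<2*m}. AA m (opA m x y) = opA m (AA m x) (AA m y)"
    by (auto simp: AA_hom)
qed

end

lemma id_aut: "groupoid_aut G f id"
  unfolding groupoid_aut_def by simp

lemma aut_cong:
  assumes "\<And>x y. x \<in> G \<Longrightarrow> y \<in> G \<Longrightarrow> f x y = g x y" "\<And>x. x \<in> G \<Longrightarrow> h x \<in> G"
  shows "groupoid_aut G f h = groupoid_aut G g h"
  unfolding groupoid_aut_def using assms by auto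

context
  fixes n :: nat
  assumes n3: "n \<ge> 3"
begin

lemma mG_eq: "mG n = 2 * 2^(n-2)"
proof -
  define k where "k = n - 3"
  have "n = Suc (Suc (Suc k))" using n3 unfolding k_def by arith
  then show ?thesis unfolding mG_def by simp
qed

lemma G2_eq: "G2 n = {0..<2 * mG n}"
proof -
  define k where "k = n - 3"
  have "n = Suc (Suc (Suc k))" using n3 unfolding k_def by arith
  then show ?thesis unfolding mG_def G2_def by simp
qed

lemma pow_eq: "2^n = 2 * mG n"
proof -
  define k where "k = n - 3"
  have "n = Suc (Suc (Suc k))" using n3 unfolding k_def by arith
  then show ?thesis unfolding mG_def by simp
qed

lemma memH: "x < 2 * mG n \<Longrightarrow> x \<in> H n \<longleftrightarrow> mG n \<le> x"
  unfolding H_def pow_eq by auto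
lemma memP: "x \<in> P n \<longleftrightarrow> \<not> mG n \<le> x"
  unfolding P_def by auto

lemma oplus_eq:
  assumes x: "x < 2 * mG n" and y: "y < 2 * mG n"
  shows "oplusG n x y = opA (mG n) x y"
  unfolding oplusG_def opA_def EH_def OH_def OP_def Let_def
  using memH[OF x] memH[OF y] memP[of x] memP[of y]
  by (cases "mG n \<le> x"; cases "mG n \<le> y"; cases "even x"; cases "even y"; simp)

lemma autA_eq:
  assumes x: "x < 2 * mG n"
  shows "autA n x = AA (mG n) x"
  unfolding autA_def AA_def OH_def OP_def Let_def
  using memH[OF x] memP[of x] x
  by (cases "mG n \<le> x"; cases "even x"; simp add: le_mod_geq)

lemma gyr_eq:
  assumes a: "a < 2 * mG n" and b: "b < 2 * mG n" and c: "c < 2 * mG n"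
  shows "gyrG n a b c = gA (mG n) a b c"
  unfolding gyrG_def gA_def Mb_def Mset_def EH_def OH_def OP_def
  using memH[OF a] memH[OF b] memP[of a] memP[of b] autA_eq[OF c]
  by (cases "mG n \<le> a"; cases "mG n \<le> b"; cases "even a"; cases "even b"; simp)

end

lemma aut_transfer:
  assumes A: "groupoid_aut G g h'" and H: "\<forall>x\<in>G. h x = h' x" and F: "\<forall>x\<in>G. \<forall>y\<in>G. f x y = g x y"
    and C: "\<forall>x\<in>G. \<forall>y\<in>G. f x y \<in> G"
  shows "groupoid_aut G f h"
proof -
  have bh: "bij_betw h' G G" using A unfolding groupoid_aut_def by (rule conjunct1)
  have hom: "\<forall>x\<in>G. \<forall>y\<in>G. h' (g x y) = g (h' x) (h' y)" using A unfolding groupoid_aut_def by (rule conjunct2)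
  have "bij_betw h G G = bij_betw h' G G" by (rule bij_betw_cong) (use H in blast)
  with bh have "bij_betw h G G" by simp
  moreover have "\<forall>x\<in>G. \<forall>y\<in>G. h (f x y) = f (h x) (h y)"
  proof (intro ballI)
    fix x y assume x: "x \<in> G" and y: "y \<in> G"
    have hx: "h' x \<in> G" "h' y \<in> G" using bij_betwE[OF bh] x y by blast+
    have fxy: "f x y \<in> G" using C x y by blast
    have "h (f x y) = h' (f x y)" using H fxy by blast
    also have "\<dots> = h' (g x y)" using F x y by metis
    also have "\<dots> = g (h' x) (h' y)" using hom x y by blast
    also have "\<dots> = f (h' x) (h' y)" using F hx by metis
    also have "\<dots> = f (h x) (h y)" using H x y by metis
    finally show "h (f x y) = f (h x) (h y)" .
  qed
  ultimately show ?thesis unfolding groupoid_aut_def by blast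
qed

theorem mainTheorem2:
  fixes n :: nat
  assumes "n \<ge> 3"
  shows "is_gyrogroup (G2 n) (oplusG n) 0 (gyrG n)"
proof -
  define m where "m = mG n"
  define q :: nat where "q = 2^(n-2)"
  have mq: "m = 2*q" unfolding m_def q_def by (rule mG_eq[OF assms])
  have eq: "even q" unfolding q_def using assms by simp
  have qpos: "0 < q" unfolding q_def by simp
  have G: "G2 n = {0..<2*m}" unfolding m_def by (rule G2_eq[OF assms])
  have mp: "0 < m" using mq qpos by simp
  note lt = opA_lt[OF mq eq qpos]
  note gf = gA_facts[OF mq eq qpos]
  have oe: "\<And>x y. x < 2*m \<Longrightarrow> y < 2*m \<Longrightarrow> oplusG n x y = opA m x y"
    unfolding m_def by (rule oplus_eq[OF assms])
  have ge: "\<And>a b c. a < 2*m \<Longrightarrow> b < 2*m \<Longrightarrow> c < 2*m \<Longrightarrow> gyrG n a b c = gA m a b c"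
    unfolding m_def by (rule gyr_eq[OF assms])
  have c1: "\<forall>x\<in>G2 n. \<forall>y\<in>G2 n. oplusG n x y \<in> G2 n" unfolding G using oe lt by simp
  have c2: "(0::nat) \<in> G2 n" unfolding G using mp by simp
  have c3: "\<forall>x\<in>G2 n. oplusG n 0 x = x" unfolding G using oe op0[OF mq eq qpos] mp by simp
  have c4: "\<forall>a\<in>G2 n. \<exists>b\<in>G2 n. oplusG n b a = 0"
  proof
    fix a assume "a \<in> G2 n"
    then have a: "a < 2*m" unfolding G by simp
    define b where "b = (if m \<le> a then m else 0) + (m - a mod m) mod m"
    have w: "(m - a mod m) mod m < m" using mp by (rule mod_less_divisor)
    have "b \<le> m + (m - a mod m) mod m" unfolding b_def by simp
    then have b: "b < 2*m" using w by linarith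
    have "oplusG n b a = 0" using oe[OF b a] linv[OF mq eq qpos a] unfolding b_def by simp
    then show "\<exists>b\<in>G2 n. oplusG n b a = 0" using b unfolding G by auto
  qed
  have c5: "\<forall>a\<in>G2 n. \<forall>b\<in>G2 n. groupoid_aut (G2 n) (oplusG n) (gyrG n a b)"
  proof (intro ballI)
    fix a b assume "a \<in> G2 n" "b \<in> G2 n"
    then have a: "a < 2*m" and b: "b < 2*m" unfolding G by auto
    have "groupoid_aut {0..<2*m} (opA m) (gA m a b)"
      unfolding gA_def using AA_aut[OF mq eq qpos] id_aut[of "{0..<2*m}" "opA m"] by simp
    then show "groupoid_aut (G2 n) (oplusG n) (gyrG n a b)" unfolding G
      by (rule aut_transfer) (use a b oe ge lt in auto)
  qed
  have c6: "\<forall>a\<in>G2 n. \<forall>b\<in>G2 n. \<forall>c\<in>G2 n. oplusG n a (oplusG n b c) = oplusG n (oplusG n a b) (gyrG n a b c)"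
    unfolding G using oe ge lt gf assoc[OF mq eq qpos] by simp
  have c7: "\<forall>a\<in>G2 n. \<forall>b\<in>G2 n. \<forall>c\<in>G2 n. gyrG n a b c = gyrG n (oplusG n a b) b c"
  proof (intro ballI)
    fix a b c assume "a \<in> G2 n" "b \<in> G2 n" "c \<in> G2 n"
    then have a: "a < 2*m" and b: "b < 2*m" and c: "c < 2*m" unfolding G by auto
    have ab: "opA m a b < 2*m" using lt a b .
    have "gyrG n a b c = gA m a b c" using ge a b c .
    also have "\<dots> = gA m (opA m a b) b c" using gyr_loop[OF mq eq qpos a b] by simp
    also have "\<dots> = gyrG n (opA m a b) b c" using ge[OF ab b c] by simp
    also have "\<dots> = gyrG n (oplusG n a b) b c" using oe[OF a b] by simp
    finally show "gyrG n a b c = gyrG n (oplusG n a b) b c" .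
  qed
  show ?thesis unfolding is_gyrogroup_def using c1 c2 c3 c4 c5 c6 c7 by blast
qed

end
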